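(* (i) For every $K\ge 2$ and evenly spaced $z_1<\dots<z_K$, the set of CDRL statistics $\{s_{z_k,z_{k+1}}:k=1,\dots,K-1\}$, where $s_{z_k,z_{k+1}}(\mu)=\mathbb{E}_{Z\sim\mu}[h_{z_k,z_{k+1}}(Z)]$, is not Bellman closed. (ii) For every $K\ge1$, the set of QDRL statistics $\{\mu\mapsto F_\mu^{-1}(\tau_k): k=1,\dots,K\}$ with $\tau_k=\frac{2k-1}{2K}$ is not Bellman closed.
   Context: For $a<b$, $h_{a,b}:\mathbb{R}\to\mathbb{R}$ is the piecewise linear function with $h_{a,b}(x)=1$ for $x\le a$, $h_{a,b}(x)=0$ for $x\ge b$, and $h_{a,b}(x)=(b-x)/(b-a)$ for $x\in[a,b]$. For a distribution $\mu$ with CDF $F_\mu$, $F_\mu^{-1}(\tau)=\inf\{z\in\mathbb{R}:F_\mu(z)\ge\tau\}$. MDP setting: finite state space $\mathcal X$, finite action space $\mathcal A$, transition kernel $p$, discount $\gamma\in[0,1)$, reward distributions $\mathcal R(\cdot\mid x,a)$; policy $\pi:\mathcal X\to\mathscr P(\mathcal A)$; given $X_0=x,A_0=a$, $R_t\sim\mathcal R(\cdot\mid X_t,A_t)$, $X_{t+1}\sim p(\cdot\mid X_t,A_t)$, $A_{t+1}\sim\pi(\cdot\mid X_{t+1})$; $\eta^\pi(x,a)$ is the law of $\sum_t\gamma^tR_t$. Bellman closedness: a finite set of statistics $\{s_1,\dots,s_K\}$ is Bellman closed if for each $\gamma\in[0,1)$ there is a single map $G_\gamma$ such that for every MDP with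 discount $\gamma$, every policy $\pi$ and every $(x,a)$, $s_{1:K}(\eta^\pi(x,a))=G_\gamma\big(\mathrm{Law}(R_0,s_{1:K}(\eta^\pi(X_1,A_1))\mid X_0=x,A_0=a)\big)$. *)

theory Defs
  imports "HOL-Probability.Probability"
begin

definition hfun :: "real \<Rightarrow> real \<Rightarrow> real \<Rightarrow> real" where
  "hfun a b x = (if x \<le> a then 1 else if x \<ge> b then 0 else (b - x) / (b - a))"

definition cdrl_stat :: "real \<Rightarrow> real \<Rightarrow> real measure \<Rightarrow> real" where
  "cdrl_stat a b \<mu> = (\<integral>z. hfun a b z \<partial>\<mu>)"

definition quantile :: "real measure \<Rightarrow> real \<Rightarrow> real" where
  "quantile \<mu> \<tau> = Inf {z. cdf \<mu> z \<ge> \<tau>}"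

text \<open>Finite MDPs, states and actions coded as natural numbers in finite carrier sets.
  Rewards are finitely supported distributions (so returns are bounded).\<close>
definition is_mdp ::
  "nat set \<Rightarrow> nat set \<Rightarrow> (nat \<Rightarrow> nat \<Rightarrow> nat pmf) \<Rightarrow> (nat \<Rightarrow> nat \<Rightarrow> real pmf) \<Rightarrow> bool" where
  "is_mdp X A p R \<longleftrightarrow> finite X \<and> finite A \<and>
     (\<forall>x\<in>X. \<forall>a\<in>A. set_pmf (p x a) \<subseteq> X \<and> finite (set_pmf (R x a)))"

definition is_policy :: "nat set \<Rightarrow> nat set \<Rightarrow> (nat \<Rightarrow> nat pmf) \<Rightarrow> bool" where
  "is_policy X A \<pi> \<longleftrightarrow> (\<forall>x\<in>X. set_pmf (\<pi> x) \<subseteq> A)"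

text \<open>Law of the n-step truncated return sum_{t<n} gamma^t R_t given X_0 = x, A_0 = a.\<close>
fun ret :: "real \<Rightarrow> (nat \<Rightarrow> nat \<Rightarrow> nat pmf) \<Rightarrow> (nat \<Rightarrow> nat \<Rightarrow> real pmf) \<Rightarrow> (nat \<Rightarrow> nat pmf)
             \<Rightarrow> nat \<Rightarrow> nat \<Rightarrow> nat \<Rightarrow> real pmf" where
  "ret \<gamma> p R \<pi> 0 x a = return_pmf 0"
| "ret \<gamma> p R \<pi> (Suc n) x a =
     bind_pmf (R x a) (\<lambda>r. bind_pmf (p x a) (\<lambda>x'. bind_pmf (\<pi> x') (\<lambda>a'.
       map_pmf (\<lambda>g. r + \<gamma> * g) (ret \<gamma> p R \<pi> n x' a'))))"

text \<open>eta is the return distribution eta^pi: the law of sum_t gamma^t R_t, i.e. the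
  (weak) limit of the laws of the truncated sums.\<close>
definition is_return_dist ::
  "real \<Rightarrow> nat set \<Rightarrow> nat set \<Rightarrow> (nat \<Rightarrow> nat \<Rightarrow> nat pmf) \<Rightarrow> (nat \<Rightarrow> nat \<Rightarrow> real pmf)
     \<Rightarrow> (nat \<Rightarrow> nat pmf) \<Rightarrow> (nat \<Rightarrow> nat \<Rightarrow> real measure) \<Rightarrow> bool" where
  "is_return_dist \<gamma> X A p R \<pi> \<eta> \<longleftrightarrow>
     (\<forall>x\<in>X. \<forall>a\<in>A. real_distribution (\<eta> x a) \<and>
        weak_conv_m (\<lambda>n. measure_pmf (ret \<gamma> p R \<pi> n x a)) (\<eta> x a))"

definition bellman_law ::
  "(real measure \<Rightarrow> real) list \<Rightarrow> (nat \<Rightarrow> nat \<Rightarrow> nat pmf) \<Rightarrow> (nat \<Rightarrow> nat \<Rightarrow> real pmf)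
     \<Rightarrow> (nat \<Rightarrow> nat pmf) \<Rightarrow> (nat \<Rightarrow> nat \<Rightarrow> real measure) \<Rightarrow> nat \<Rightarrow> nat \<Rightarrow> (real \<times> real list) pmf" where
  "bellman_law ss p R \<pi> \<eta> x a =
     bind_pmf (R x a) (\<lambda>r. bind_pmf (p x a) (\<lambda>x'. bind_pmf (\<pi> x') (\<lambda>a'.
       return_pmf (r, map (\<lambda>s. s (\<eta> x' a')) ss))))"

definition bellman_closed :: "(real measure \<Rightarrow> real) list \<Rightarrow> bool" where
  "bellman_closed ss \<longleftrightarrow>
     (\<forall>\<gamma>::real. 0 \<le> \<gamma> \<and> \<gamma> < 1 \<longrightarrow>
        (\<exists>G :: (real \<times> real list) pmf \<Rightarrow> real list.
           \<forall>X A p R \<pi> \<eta>. is_mdp X A p R \<and> is_policy X A \<pi> \<and> is_return_dist \<gamma> X A p R \<pi> \<eta> \<longrightarrow>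
              (\<forall>x\<in>X. \<forall>a\<in>A. map (\<lambda>s. s (\<eta> x a)) ss = G (bellman_law ss p R \<pi> \<eta> x a))))"

end

theory Submission imports Defs begin

definition toM :: "real pmf \<Rightarrow> real measure" where
  "toM P = distr (measure_pmf P) borel (\<lambda>x. x)"

lemma toM_rd: "real_distribution (toM P)"
  unfolding toM_def real_distribution_def
  by (auto intro!: measure_pmf.prob_space_distr simp: real_distribution_axioms_def)

lemma cdf_toM: "cdf (toM P) z = measure_pmf.prob P {..z}"
  unfolding toM_def cdf_def by (simp add: measure_distr)

lemma integral_toM_return:
  fixes f :: "real \<Rightarrow> real"
  assumes "f \<in> borel_measurable borel"
  shows "(\<integral>z. f z \<partial>toM (return_pmf y)) = f y"
  unfolding toM_def using assms
  by (subst integral_distr[of "\<lambda>x. x" "measure_pmf (return_pmf y)" borel f]) auto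

lemma hfun_meas: "hfun a b \<in> borel_measurable borel"
  unfolding hfun_def by measurable

lemma cdf_pmf: "cdf (measure_pmf P) z = measure_pmf.prob P {..z}"
  by (simp add: cdf_def)

lemma weak_ev:
  assumes "\<And>n. n \<ge> N \<Longrightarrow> f n = P"
  shows "weak_conv_m (\<lambda>n. measure_pmf (f n)) (toM P)"
  unfolding weak_conv_m_def weak_conv_def
proof (intro allI impI)
  fix x
  have "eventually (\<lambda>n. cdf (measure_pmf (f n)) x = cdf (toM P) x) sequentially"
    using assms by (auto simp: cdf_toM cdf_pmf eventually_sequentially)
  then show "(\<lambda>n. cdf (measure_pmf (f n)) x) \<longlonglongrightarrow> cdf (toM P) x"
    by (rule tendsto_eventually)
qed
definition mp :: "nat pmf \<Rightarrow> nat \<Rightarrow> nat \<Rightarrow> nat pmf" where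
  "mp p0 x a = (if x = 0 then p0 else return_pmf 2)"
definition mR :: "real pmf \<Rightarrow> real pmf \<Rightarrow> nat \<Rightarrow> nat \<Rightarrow> real pmf" where
  "mR R0 R1 x a = (if x = 0 then R0 else if x = 1 then R1 else return_pmf 0)"
definition mpi :: "nat \<Rightarrow> nat pmf" where "mpi x = return_pmf 0"
definition L0 :: "real \<Rightarrow> real pmf \<Rightarrow> nat pmf \<Rightarrow> real pmf \<Rightarrow> real pmf" where
  "L0 \<gamma> R0 p0 R1 = bind_pmf R0 (\<lambda>r. bind_pmf p0 (\<lambda>x'.
     map_pmf (\<lambda>g. r + \<gamma> * g) (if x' = 1 then R1 else return_pmf 0)))"
definition meta :: "real \<Rightarrow> real pmf \<Rightarrow> nat pmf \<Rightarrow> real pmf \<Rightarrow> nat \<Rightarrow> nat \<Rightarrow> real measure" where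
  "meta \<gamma> R0 p0 R1 x a = toM (if x = 0 then L0 \<gamma> R0 p0 R1 else if x = 1 then R1 else return_pmf 0)"

lemma ret_2: "ret \<gamma> (mp p0) (mR R0 R1) mpi n 2 a = return_pmf 0"
  by (induction n arbitrary: a) (auto simp: mp_def mR_def mpi_def bind_return_pmf)

lemma ret_ne0: "x \<noteq> 0 \<Longrightarrow> ret \<gamma> (mp p0) (mR R0 R1) mpi (Suc n) x a = (if x = 1 then R1 else return_pmf 0)"
  by (auto simp: ret_2 mp_def mR_def mpi_def bind_return_pmf bind_return_pmf')

lemma ret_0:
  assumes "set_pmf p0 \<subseteq> {1,2}"
  shows "ret \<gamma> (mp p0) (mR R0 R1) mpi (Suc (Suc n)) 0 a = L0 \<gamma> R0 p0 R1"
proof -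
  have "ret \<gamma> (mp p0) (mR R0 R1) mpi (Suc (Suc n)) 0 a =
     bind_pmf R0 (\<lambda>r. bind_pmf p0 (\<lambda>x'.
       map_pmf (\<lambda>g. r + \<gamma> * g) (ret \<gamma> (mp p0) (mR R0 R1) mpi (Suc n) x' 0)))"
    by (simp add: mp_def mR_def mpi_def bind_return_pmf)
  also have "\<dots> = L0 \<gamma> R0 p0 R1"
    unfolding L0_def
    apply (intro bind_pmf_cong refl)
    using assms by (subst ret_ne0) auto
  finally show ?thesis .
qed

lemma rd:
  assumes "finite (set_pmf R0)" "finite (set_pmf R1)" "set_pmf p0 \<subseteq> {1,2}"
  shows "is_mdp {0,1,2} {0} (mp p0) (mR R0 R1) \<and> is_policy {0,1,2} {0} mpi \<and>
     is_return_dist \<gamma> {0,1,2} {0} (mp p0) (mR R0 R1) mpi (meta \<gamma> R0 p0 R1)"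
proof (intro conjI)
  show "is_mdp {0,1,2} {0} (mp p0) (mR R0 R1)"
    using assms by (auto simp: is_mdp_def mp_def mR_def)
  show "is_policy {0,1,2} {0} mpi" by (simp add: is_policy_def mpi_def)
  show "is_return_dist \<gamma> {0,1,2} {0} (mp p0) (mR R0 R1) mpi (meta \<gamma> R0 p0 R1)"
    unfolding is_return_dist_def
  proof (intro ballI conjI)
    fix x a assume x: "x \<in> {0,1,2::nat}" and a: "a \<in> {0::nat}"
    show "real_distribution (meta \<gamma> R0 p0 R1 x a)" by (simp add: meta_def toM_rd)
    show "weak_conv_m (\<lambda>n. measure_pmf (ret \<gamma> (mp p0) (mR R0 R1) mpi n x a)) (meta \<gamma> R0 p0 R1 x a)"
      unfolding meta_def
    proof (rule weak_ev[where N=2])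
      fix n :: nat assume "2 \<le> n"
      then obtain m where n: "n = Suc (Suc m)" by (metis add_2_eq_Suc le_Suc_ex)
      show "ret \<gamma> (mp p0) (mR R0 R1) mpi n x a =
        (if x = 0 then L0 \<gamma> R0 p0 R1 else if x = 1 then R1 else return_pmf 0)"
        using x unfolding n by (cases "x = 0") (simp_all add: ret_0[OF assms(3)] ret_ne0 del: ret.simps)
    qed
  qed
qed

lemma gen:
  assumes g: "0 \<le> \<gamma>" "\<gamma> < 1"
    and fin: "finite (set_pmf R0)" "finite (set_pmf R1)" "finite (set_pmf R2)"
    and sp: "set_pmf p0 \<subseteq> {1,2}"
    and same: "map (\<lambda>s. s (toM R1)) ss = map (\<lambda>s. s (toM R2)) ss"
    and diff: "map (\<lambda>s. s (toM (L0 \<gamma> R0 p0 R1))) ss \<noteq> map (\<lambda>s. s (toM (L0 \<gamma> R0 p0 R2))) ss"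
  shows "\<not> bellman_closed ss"
proof
  assume "bellman_closed ss"
  then obtain G where G: "\<And>X A p R \<pi> \<eta>. is_mdp X A p R \<and> is_policy X A \<pi> \<and> is_return_dist \<gamma> X A p R \<pi> \<eta> \<Longrightarrow>
              (\<forall>x\<in>X. \<forall>a\<in>A. map (\<lambda>s. s (\<eta> x a)) ss = G (bellman_law ss p R \<pi> \<eta> x a))"
    unfolding bellman_closed_def using g by blast
  have e1: "map (\<lambda>s. s (toM (L0 \<gamma> R0 p0 R1))) ss = G (bellman_law ss (mp p0) (mR R0 R1) mpi (meta \<gamma> R0 p0 R1) 0 0)"
    using G[OF rd[OF fin(1) fin(2) sp]] by (auto simp: meta_def)
  have e2: "map (\<lambda>s. s (toM (L0 \<gamma> R0 p0 R2))) ss = G (bellman_law ss (mp p0) (mR R0 R2) mpi (meta \<gamma> R0 p0 R2) 0 0)"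
    using G[OF rd[OF fin(1) fin(3) sp]] by (auto simp: meta_def)
  have "bellman_law ss (mp p0) (mR R0 R1) mpi (meta \<gamma> R0 p0 R1) 0 0 =
        bellman_law ss (mp p0) (mR R0 R2) mpi (meta \<gamma> R0 p0 R2) 0 0"
    unfolding bellman_law_def
    apply (simp add: mp_def mR_def mpi_def bind_return_pmf)
    apply (intro bind_pmf_cong refl)
    using sp same by (auto simp: meta_def)
  with e1 e2 diff show False by simp
qed
lemma measure_bind_pmf': "measure_pmf.prob (bind_pmf M N) X = (\<integral>x. measure_pmf.prob (N x) X \<partial>M)"
proof -
  have "emeasure (measure_pmf (bind_pmf M N)) X = (\<integral>\<^sup>+x. ennreal (measure_pmf.prob (N x) X) \<partial>M)"
    by (subst emeasure_bind_pmf) (simp add: measure_pmf.emeasure_eq_measure)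
  also have "\<dots> = ennreal (\<integral>x. measure_pmf.prob (N x) X \<partial>M)"
    by (rule nn_integral_eq_integral) (auto intro!: measure_pmf.integrable_const_bound[where B=1])
  finally show ?thesis
    by (simp add: measure_pmf.emeasure_eq_measure)
qed

lemma quantile_eq:
  assumes "cdf \<mu> v \<ge> \<tau>" "\<And>z. z < v \<Longrightarrow> cdf \<mu> z < \<tau>"
  shows "quantile \<mu> \<tau> = v"
  unfolding quantile_def
  by (rule cInf_eq_minimum) (use assms in \<open>auto simp: not_less[symmetric]\<close>)

definition Rb :: "real \<Rightarrow> real pmf" where
  "Rb e = bind_pmf (bernoulli_pmf e) (\<lambda>b. return_pmf (if b then 0 else 1))"
definition pb :: "real \<Rightarrow> nat pmf" where
  "pb q = map_pmf (\<lambda>b. if b then 1 else 2) (bernoulli_pmf q)"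

lemma cdf_L0:
  assumes "0 \<le> q" "q \<le> 1"
  shows "cdf (toM (L0 (1/2) (return_pmf 0) (pb q) R)) z =
     measure_pmf.prob R {..2*z} * q + (if 0 \<le> z then 1 else 0) * (1 - q)"
proof -
  have "(\<lambda>g. g / 2) -` {..z} = {..2*z::real}" by auto
  then show ?thesis using assms
    by (simp add: cdf_toM pb_def L0_def bind_return_pmf measure_bind_pmf' map_pmf_def[symmetric] bind_map_pmf)
qed

lemma prob_Rb: "0 \<le> e \<Longrightarrow> e \<le> 1 \<Longrightarrow>
   measure_pmf.prob (Rb e) S = e * indicator S 0 + (1 - e) * indicator S 1"
  by (simp add: Rb_def measure_bind_pmf')

lemma part2:
  fixes K :: nat
  assumes K: "K \<ge> 1"
  shows "\<not> bellman_closed (map (\<lambda>k. \<lambda>\<mu>. quantile \<mu> ((2 * real k - 1) / (2 * real K))) [1..<Suc K])"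
proof -
  define e :: real where "e = 1 / (4 * real K)"
  define q :: real where "q = 2 / (4 * real K - 1)"
  define m :: real where "m = (2 * real K - 1) / (2 * real K)"
  have K1: "real K \<ge> 1" using K by simp
  have e0: "0 < e" "e < 1" using K1 by (auto simp: e_def field_simps)
  have q0: "0 < q" "q < 1" using K1 by (auto simp: q_def field_simps)
  have key1: "1 - q < m" using K1 by (simp add: q_def m_def field_simps)
  have m1: "m \<le> 1" using K1 by (simp add: m_def)
  have h: "q * (1 - e) = 1 / (2 * real K)"
  proof -
    have "4 * real K - 1 > 0" using K1 by simp
    then have "q * (1 - e) = (2 / (4 * real K - 1)) * ((4 * real K - 1) / (4 * real K))"
      using K1 by (simp add: q_def e_def field_simps)
    also have "\<dots> = 1 / (2 * real K)" using \<open>4 * real K - 1 > 0\<close> K1 by (simp add: field_simps)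
    finally show ?thesis .
  qed
  have key2: "e * q + (1 - q) = m"
  proof -
    have "e * q + (1 - q) = 1 - q * (1 - e)" by (simp add: algebra_simps)
    also have "\<dots> = m" using h K1 by (simp add: m_def field_simps)
    finally show ?thesis .
  qed
  have tau: "e < (2 * real k - 1) / (2 * real K) \<and> (2 * real k - 1) / (2 * real K) \<le> 1"
    if "k \<in> set [1..<Suc K]" for k
  proof -
    have k: "1 \<le> real k" "real k \<le> real K" using that by auto
    show ?thesis using k K1 by (auto simp: e_def field_simps)
  qed
  show ?thesis
  proof (rule gen[of "1/2" "return_pmf 0" "return_pmf 1" "Rb e" "pb q"])
    show "finite (set_pmf (Rb e))" by (simp add: Rb_def)
    show "set_pmf (pb q) \<subseteq> {1, 2}" by (auto simp: pb_def)
    show "map (\<lambda>s. s (toM (return_pmf 1))) (map (\<lambda>k \<mu>. quantile \<mu> ((2 * real k - 1) / (2 * real K))) [1..<Suc K]) =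
          map (\<lambda>s. s (toM (Rb e))) (map (\<lambda>k \<mu>. quantile \<mu> ((2 * real k - 1) / (2 * real K))) [1..<Suc K])"
    proof (simp only: map_map o_def map_eq_conv, intro ballI)
      fix k assume k: "k \<in> set [1..<Suc K]"
      let ?t = "(2 * real k - 1) / (2 * real K)"
      have t: "e < ?t" "?t \<le> 1" using tau[OF k] by auto
      have "quantile (toM (return_pmf 1)) ?t = 1"
        by (rule quantile_eq) (use t e0 in \<open>auto simp: cdf_toM\<close>)
      moreover have "quantile (toM (Rb e)) ?t = 1"
        by (rule quantile_eq) (use t e0 in \<open>auto simp: cdf_toM prob_Rb indicator_def\<close>)
      ultimately show "quantile (toM (return_pmf 1)) ?t = quantile (toM (Rb e)) ?t" by simp
    qed
    show "map (\<lambda>s. s (toM (L0 (1/2) (return_pmf 0) (pb q) (return_pmf 1))))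
            (map (\<lambda>k \<mu>. quantile \<mu> ((2 * real k - 1) / (2 * real K))) [1..<Suc K]) \<noteq>
          map (\<lambda>s. s (toM (L0 (1/2) (return_pmf 0) (pb q) (Rb e))))
            (map (\<lambda>k \<mu>. quantile \<mu> ((2 * real k - 1) / (2 * real K))) [1..<Suc K])"
    proof (simp only: map_map o_def map_eq_conv)
      have Kin: "K \<in> set [1..<Suc K]" using K by simp
      have mK: "(2 * real K - 1) / (2 * real K) = m" by (simp add: m_def)
      have "quantile (toM (L0 (1/2) (return_pmf 0) (pb q) (return_pmf 1))) m = 1/2"
        by (rule quantile_eq) (use q0 key1 m1 in \<open>auto simp: cdf_L0\<close>)
      moreover have "quantile (toM (L0 (1/2) (return_pmf 0) (pb q) (Rb e))) m = 0"
        by (rule quantile_eq) (use q0 e0 key1 key2 in \<open>auto simp: cdf_L0 prob_Rb indicator_def\<close>)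
      ultimately show "\<not> (\<forall>k\<in>set [1..<Suc K]. quantile (toM (L0 (1/2) (return_pmf 0) (pb q) (return_pmf 1))) ((2 * real k - 1) / (2 * real K)) =
           quantile (toM (L0 (1/2) (return_pmf 0) (pb q) (Rb e))) ((2 * real k - 1) / (2 * real K)))"
        using Kin mK by force
    qed
  qed auto
qed
lemma cdrl_return: "cdrl_stat a b (toM (return_pmf y)) = hfun a b y"
  unfolding cdrl_stat_def by (rule integral_toM_return[OF hfun_meas])

lemma part1:
  fixes K :: nat and c d :: real
  assumes K: "K \<ge> 2" and d: "d > 0"
  shows "\<not> bellman_closed (map (\<lambda>k. cdrl_stat (c + real k * d) (c + real (Suc k) * d)) [1..<K])"
proof (rule gen[of "1/2" "return_pmf (c/2 + d)" "return_pmf (c + d)" "return_pmf (c - d)" "return_pmf 1"])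
  have L: "\<And>v. L0 (1/2) (return_pmf (c/2 + d)) (return_pmf 1) (return_pmf v) = return_pmf (c/2 + d + v/2)"
    by (simp add: L0_def bind_return_pmf)
  show "map (\<lambda>s. s (toM (return_pmf (c + d)))) (map (\<lambda>k. cdrl_stat (c + real k * d) (c + real (Suc k) * d)) [1..<K]) =
        map (\<lambda>s. s (toM (return_pmf (c - d)))) (map (\<lambda>k. cdrl_stat (c + real k * d) (c + real (Suc k) * d)) [1..<K])"
  proof (simp only: map_map o_def map_eq_conv cdrl_return, intro ballI)
    fix k assume k: "k \<in> set [1..<K]"
    then have k1: "1 \<le> real k" by simp
    have "d \<le> real k * d" using mult_right_mono[OF k1, of d] d by simp
    moreover have "- d \<le> real k * d" using calculation d by linarith
    ultimately show "hfun (c + real k * d) (c + real (Suc k) * d) (c + d) = hfun (c + real k * d) (c + real (Suc k) * d) (c - d)"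
      using d by (auto simp: hfun_def)
  qed
  show "map (\<lambda>s. s (toM (L0 (1/2) (return_pmf (c/2 + d)) (return_pmf 1) (return_pmf (c + d)))))
           (map (\<lambda>k. cdrl_stat (c + real k * d) (c + real (Suc k) * d)) [1..<K]) \<noteq>
        map (\<lambda>s. s (toM (L0 (1/2) (return_pmf (c/2 + d)) (return_pmf 1) (return_pmf (c - d)))))
           (map (\<lambda>k. cdrl_stat (c + real k * d) (c + real (Suc k) * d)) [1..<K])"
  proof (simp only: map_map o_def map_eq_conv L cdrl_return)
    have k1: "1 \<in> set [1..<K]" using K by simp
    have a: "hfun (c + real 1 * d) (c + real (Suc 1) * d) (c/2 + d + (c + d)/2) = 1/2"
      using d by (simp add: hfun_def field_simps)
    have b: "hfun (c + real 1 * d) (c + real (Suc 1) * d) (c/2 + d + (c - d)/2) = 1"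
      using d by (simp add: hfun_def field_simps)
    show "\<not> (\<forall>k\<in>set [1..<K]. hfun (c + real k * d) (c + real (Suc k) * d) (c/2 + d + (c + d)/2) =
               hfun (c + real k * d) (c + real (Suc k) * d) (c/2 + d + (c - d)/2))"
      using k1 a b by force
  qed
qed auto
theorem lemma3:
  shows "(\<forall>(K::nat) (c::real) (d::real). K \<ge> 2 \<and> d > 0 \<longrightarrow>
            (let z = (\<lambda>k::nat. c + real k * d)
             in \<not> bellman_closed (map (\<lambda>k. cdrl_stat (z k) (z (Suc k))) [1..<K])))
       \<and> (\<forall>K::nat. K \<ge> 1 \<longrightarrow>
            \<not> bellman_closed (map (\<lambda>k. \<lambda>\<mu>. quantile \<mu> ((2 * real k - 1) / (2 * real K))) [1..<Suc K]))"
  using part1 part2 by (simp add: Let_def)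

end
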